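(* Consider the two-sided market model described in the context with $\phi(x)=x^\theta$ for some $0<\theta<1$, and CP cost parameter $a>\zeta$. Let $S_{NN}(a)=\mathcal S(y_0)$ be the social welfare under net neutrality (all consumers and all CPs participate) and $S_{RM}(a)=\mathcal S(y^*(a))$ the social welfare under ISP revenue maximization, where $y^*(a)$ solves $g(y^* )=a$. Then there exists a unique $\bar a>\zeta$ such that for $\zeta<a<\bar a$ net neutrality yields higher social welfare than revenue maximization ($S_{NN}(a)>S_{RM}(a)$), while for $a>\bar a$ revenue maximization yields higher social welfare ($S_{RM}(a)>S_{NN}(a)$).
   Context: Model: fix $\gamma>2$, $\beta>2$, $\lambda>0$. Consumer types have density $x^{-\gamma}$ on $x\ge x_0:=(\frac{1}{\gamma-1})^{\frac{1}{\gamma-1}}$, CP types density $y^{-\beta}$ on $y\ge y_0:=(\frac{1}{\beta-1})^{\frac{1}{\beta-1}}$. Let $Y(s)=\int_s^\infty y^{1-\beta}dy$, $\bar X=\int_{x_0}^\infty x^{1-\gamma}dx$, $\bar Y=Y(y_0)$. With all consumers participating and CPs of type $\ge y$ participating, the social welfare (for CP cost parameter $a$) is $\mathcal S(y)=\int_{x_0}^\infty\phi(x\sqrt{\bar YY(y)})x^{-\gamma}dx+\lambda\bar X\sqrt{\bar YY(y)}-aY(y)$. The revenue-maximizing ISP (charging a membership fee and a CP fee that make threshold types indifferent) excludes all consumers below $x_0$ and CPs below $y^*$, where $y^*$ solves $g(y^* )=a$ with $g(y)=\frac12\big(\frac{\gamma-2}{\gamma-1}\phi'(x_0\sqrt{\bar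 Y Y(y)})+\lambda\big)\frac{\bar X\sqrt{\bar Y}}{\sqrt{Y(y)}}$ (increasing in $y$). Also $\zeta=\max\{\frac{1}{2}(\frac{\gamma-2}{\gamma-1}\phi'(\bar Yx_0)+\lambda)\bar X,\ \frac{1}{2}(\int_{x_0}^{\infty}\phi'(x\bar Y)x^{1-\gamma}dx+\lambda \bar X)\}$; for $a>\zeta$ net neutrality is not socially optimal. *)

theory Defs
  imports "HOL-Analysis.Analysis"
begin

text \<open>Two-sided market model. Parameters: gam (\<gamma>), bet (\<beta>), lam (\<lambda>), th (\<theta>),
  CP cost parameter a. Integrals over unbounded intervals are Henstock-Kurzweil integrals.\<close>

definition phi :: "real \<Rightarrow> real \<Rightarrow> real" where
  "phi th x = x powr th"

definition phi' :: "real \<Rightarrow> real \<Rightarrow> real" where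
  "phi' th x = th * x powr (th - 1)"

definition x0 :: "real \<Rightarrow> real" where
  "x0 gam = (1 / (gam - 1)) powr (1 / (gam - 1))"

definition y0 :: "real \<Rightarrow> real" where
  "y0 bet = (1 / (bet - 1)) powr (1 / (bet - 1))"

definition Yf :: "real \<Rightarrow> real \<Rightarrow> real" where
  "Yf bet s = integral {s..} (\<lambda>y. y powr (1 - bet))"

definition Xbar :: "real \<Rightarrow> real" where
  "Xbar gam = integral {x0 gam..} (\<lambda>x. x powr (1 - gam))"

definition Ybar :: "real \<Rightarrow> real" where
  "Ybar bet = Yf bet (y0 bet)"

text \<open>Social welfare when all consumers and CPs of type \<ge> y participate.\<close>
definition welfare :: "real \<Rightarrow> real \<Rightarrow> real \<Rightarrow> real \<Rightarrow> real \<Rightarrow> real \<Rightarrow> real" where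
  "welfare gam bet lam th a y =
     integral {x0 gam..} (\<lambda>x. phi th (x * sqrt (Ybar bet * Yf bet y)) * x powr (- gam))
     + lam * Xbar gam * sqrt (Ybar bet * Yf bet y) - a * Yf bet y"

definition gfun :: "real \<Rightarrow> real \<Rightarrow> real \<Rightarrow> real \<Rightarrow> real \<Rightarrow> real" where
  "gfun gam bet lam th y =
     1/2 * ((gam - 2) / (gam - 1) * phi' th (x0 gam * sqrt (Ybar bet * Yf bet y)) + lam)
       * (Xbar gam * sqrt (Ybar bet) / sqrt (Yf bet y))"

definition zeta :: "real \<Rightarrow> real \<Rightarrow> real \<Rightarrow> real \<Rightarrow> real" where
  "zeta gam bet lam th = max
     (1/2 * ((gam - 2) / (gam - 1) * phi' th (Ybar bet * x0 gam) + lam) * Xbar gam)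
     (1/2 * (integral {x0 gam..} (\<lambda>x. phi' th (x * Ybar bet) * x powr (1 - gam)) + lam * Xbar gam))"

definition ystar :: "real \<Rightarrow> real \<Rightarrow> real \<Rightarrow> real \<Rightarrow> real \<Rightarrow> real" where
  "ystar gam bet lam th a = (THE y. y0 bet \<le> y \<and> gfun gam bet lam th y = a)"

definition S_NN :: "real \<Rightarrow> real \<Rightarrow> real \<Rightarrow> real \<Rightarrow> real \<Rightarrow> real" where
  "S_NN gam bet lam th a = welfare gam bet lam th a (y0 bet)"

definition S_RM :: "real \<Rightarrow> real \<Rightarrow> real \<Rightarrow> real \<Rightarrow> real \<Rightarrow> real" where
  "S_RM gam bet lam th a = welfare gam bet lam th a (ystar gam bet lam th a)"

end

theory Submission
  imports Defs
begin


definition Qp :: "real \<Rightarrow> real \<Rightarrow> real \<Rightarrow> real" where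
  "Qp a r t = (1+t)*t^2 + r*a*(1+t)*(1-t^2) - 2*a*(1-t)*(r*(1-a) - t^2*(1-r*a))"

definition Qd :: "real \<Rightarrow> real \<Rightarrow> real \<Rightarrow> real" where
  "Qd a r t = 2*t + 3*t^2 + r*a*(1-2*t-3*t^2) + 2*a*(r*(1-a) - t^2*(1-r*a)) + 4*a*t*(1-t)*(1-r*a)"

definition Np :: "real \<Rightarrow> real \<Rightarrow> real \<Rightarrow> real" where
  "Np a r t = 2*a*((1-r)*((1+2*a)*t^2 + (1-2*a)*t^4) + r*(1-2*a)*(1-a)*(1-t^2)^2)"

lemma Np_pos:
  assumes "0<a" "a<1/2" "0<r" "r<1" "0<t" "t\<le>1"
  shows "Np a r t > 0"
proof -
  have "(1-r)*((1+2*a)*t^2 + (1-2*a)*t^4) > 0" using assms by (intro mult_pos_pos add_pos_pos) auto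
  moreover have "r*(1-2*a)*(1-a)*(1-t^2)^2 \<ge> 0" using assms by simp
  ultimately show ?thesis unfolding Np_def using assms by (intro mult_pos_pos add_pos_nonneg) auto
qed

lemma Qp_deriv: "(Qp a r has_real_derivative Qd a r t) (at t)"
  unfolding Qp_def Qd_def
  apply (rule derivative_eq_intros refl)+
  apply (simp add: algebra_simps power2_eq_square)
  done

lemma Psi_deriv_gen:
  fixes q :: "real \<Rightarrow> real"
  assumes "(q has_real_derivative dq) (at t)" "t>0"
  shows "((\<lambda>t. q t * Qp a r t / ((1+t)*t^2)) has_real_derivative
     ((dq * Qp a r t + q t * Qd a r t) * ((1+t)*t^2) - q t * Qp a r t * (2*t+3*t^2)) / ((1+t)*t^2 * ((1+t)*t^2))) (at t)"
  apply (rule derivative_eq_intros assms Qp_deriv refl)+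
  using assms apply simp
  apply (simp add: algebra_simps power2_eq_square)
  done

lemma Psi_id:
  fixes q t dq :: real assumes "dq*t = 2*a*q"
  shows "(dq * Qp a r t + q * Qd a r t) * ((1+t)*t^2) - q * Qp a r t * (2*t+3*t^2) = q * t * Np a r t"
proof -
  have "dq * Qp a r t * ((1+t)*t^2) = (dq*t) * Qp a r t * ((1+t)*t)" by (simp add: power2_eq_square)
  also have "\<dots> = 2*a*q * Qp a r t * ((1+t)*t)" using assms by simp
  finally have e: "dq * Qp a r t * ((1+t)*t^2) = 2*a*q * Qp a r t * ((1+t)*t)" .
  have "2*a*q * Qp a r t * ((1+t)*t) + q * Qd a r t * ((1+t)*t^2) - q * Qp a r t * (2*t+3*t^2) = q * t * Np a r t"
    unfolding Qp_def Qd_def Np_def by algebra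
  thus ?thesis using e by (simp add: algebra_simps)
qed

definition Psi :: "real \<Rightarrow> real \<Rightarrow> real \<Rightarrow> real" where
  "Psi a r t = t powr (2*a) * Qp a r t / ((1+t)*t^2)"

lemma powr_dq: fixes t a :: real shows "t>0 \<Longrightarrow> (2*a * t powr (2*a - 1)) * t = 2*a * t powr (2*a)"
  by (simp add: powr_diff)

lemma Psi_deriv:
  assumes "0<t"
  shows "(Psi a r has_real_derivative (t powr (2*a) * t * Np a r t / ((1+t)*t^2 * ((1+t)*t^2)))) (at t)"
proof -
  have d: "((\<lambda>t. t powr (2*a)) has_real_derivative (2*a * t powr (2*a - 1))) (at t)"
    using has_real_derivative_powr[OF assms] .
  show ?thesis
    using Psi_deriv_gen[OF d assms, of a r] Psi_id[where a=a and r=r, OF powr_dq[OF assms]]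
    unfolding Psi_def by simp
qed

lemma Psi_lt1:
  assumes "0<a" "a<1/2" "0<r" "r<1" "0<t" "t<1"
  shows "Psi a r t < 1"
proof -
  have "Psi a r t < Psi a r 1"
  proof (rule DERIV_pos_imp_increasing[OF \<open>t<1\<close>])
    fix x assume x: "t \<le> x" "x \<le> 1"
    hence "x > 0" using assms by linarith
    have "Np a r x > 0" using Np_pos[OF assms(1-4) \<open>x>0\<close> x(2)] .
    hence "x powr (2*a) * x * Np a r x / ((1+x)*x^2 * ((1+x)*x^2)) > 0" using \<open>x>0\<close> by simp
    thus "\<exists>y. DERIV (Psi a r) x :> y \<and> y > 0" using Psi_deriv[OF \<open>x>0\<close>] by blast
  qed
  also have "Psi a r 1 = 1" unfolding Psi_def Qp_def by simp
  finally show ?thesis .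
qed

definition phiF :: "real \<Rightarrow> real \<Rightarrow> real \<Rightarrow> real" where
  "phiF a r t = 2*(t^2 - t powr (2*a)*(t^2 + r*a*(1-t^2)))/(t*(1-t)^2)"

lemma phi_deriv_gen:
  fixes q :: "real \<Rightarrow> real"
  assumes "(q has_real_derivative dq) (at t)" "t>0" "t<1"
  shows "((\<lambda>t. 2*(t^2 - q t*(t^2 + r*a*(1-t^2)))/(t*(1-t)^2)) has_real_derivative
     ((2*(2*t - (dq*(t^2 + r*a*(1-t^2)) + q t*(2*t - 2*r*a*t))))*(t*(1-t)^2)
      - 2*(t^2 - q t*(t^2 + r*a*(1-t^2)))*((1-t)^2 - 2*t*(1-t))) / (t*(1-t)^2 * (t*(1-t)^2))) (at t)"
  apply (rule derivative_eq_intros assms refl)+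
  using assms apply simp
  apply (simp add: algebra_simps power2_eq_square)
  done

lemma phi_id:
  fixes q t dq :: real assumes "dq*t = 2*a*q"
  shows "(2*(2*t - (dq*(t^2 + r*a*(1-t^2)) + q*(2*t - 2*r*a*t))))*(t*(1-t)^2)
      - 2*(t^2 - q*(t^2 + r*a*(1-t^2)))*((1-t)^2 - 2*t*(1-t))
     = 2*((1+t)*t^2 - q * Qp a r t)*(1-t)"
proof -
  have "dq*(t^2 + r*a*(1-t^2))*(t*(1-t)^2) = (dq*t)*(t^2 + r*a*(1-t^2))*((1-t)^2)" by (simp add: algebra_simps)
  also have "\<dots> = 2*a*q*(t^2 + r*a*(1-t^2))*((1-t)^2)" using assms by simp
  finally have e: "dq*(t^2 + r*a*(1-t^2))*(t*(1-t)^2) = 2*a*q*(t^2 + r*a*(1-t^2))*((1-t)^2)" .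
  have "(2*(2*t - q*(2*t - 2*r*a*t)))*(t*(1-t)^2) - 2*(2*a*q*(t^2 + r*a*(1-t^2))*((1-t)^2))
      - 2*(t^2 - q*(t^2 + r*a*(1-t^2)))*((1-t)^2 - 2*t*(1-t))
     = 2*((1+t)*t^2 - q * Qp a r t)*(1-t)"
    unfolding Qp_def by algebra
  thus ?thesis using e by (simp add: algebra_simps)
qed

lemma phiF_deriv:
  assumes "0<t" "t<1"
  shows "(phiF a r has_real_derivative (2*((1+t)*t^2 - t powr (2*a) * Qp a r t)*(1-t) / (t*(1-t)^2 * (t*(1-t)^2)))) (at t)"
proof -
  have d: "((\<lambda>t. t powr (2*a)) has_real_derivative (2*a * t powr (2*a - 1))) (at t)"
    using has_real_derivative_powr[OF assms(1)] .
  show ?thesis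
    using phi_deriv_gen[OF d assms, of r a] phi_id[where a=a and r=r, OF powr_dq[OF assms(1)]]
    unfolding phiF_def by simp
qed

lemma phiF_mono:
  assumes "0<a" "a<1/2" "0<r" "r<1" "0<s" "s<t" "t<1"
  shows "phiF a r s < phiF a r t"
proof (rule DERIV_pos_imp_increasing[OF \<open>s<t\<close>])
  fix x assume x: "s \<le> x" "x \<le> t"
  hence x0: "x > 0" "x < 1" using assms by linarith+
  have "Psi a r x < 1" using Psi_lt1[OF assms(1-4) x0] .
  hence "x powr (2*a) * Qp a r x < (1+x)*x^2" using x0 unfolding Psi_def by (simp add: divide_less_eq)
  hence "2*((1+x)*x^2 - x powr (2*a) * Qp a r x)*(1-x) / (x*(1-x)^2 * (x*(1-x)^2)) > 0" using x0
    by (intro divide_pos_pos mult_pos_pos) auto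
  thus "\<exists>y. DERIV (phiF a r) x :> y \<and> y > 0" using phiF_deriv[OF x0] by blast
qed




definition Gt :: "real \<Rightarrow> real \<Rightarrow> real \<Rightarrow> real \<Rightarrow> real \<Rightarrow> real" where
  "Gt a r p1 p2 t = r*a*p1*(t powr (2*a))/t^2 + p2/(2*t)"

definition Dt :: "real \<Rightarrow> real \<Rightarrow> real \<Rightarrow> real \<Rightarrow> real \<Rightarrow> real" where
  "Dt a r p1 p2 t = p1*(1 - t powr (2*a)) + p2*(1-t) - Gt a r p1 p2 t*(1-t^2)"

locale core =
  fixes a r p1 p2 :: real
  assumes th: "0<a" "a<1/2" and r: "0<r" "r<1" and p: "p1>0" "p2>0"
begin

lemma Gt_mono:
  assumes "0<s" "s<t" shows "Gt a r p1 p2 t < Gt a r p1 p2 s"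
proof -
  have e: "\<And>x. x>0 \<Longrightarrow> x powr (2*a) / x^2 = x powr (2*a-2)"
    by (simp add: powr_diff powr_numeral)
  have "t powr (2*a-2) < s powr (2*a-2)" using assms th by (intro powr_less_mono2_neg) auto
  hence "r*a*p1*(t powr (2*a-2)) \<le> r*a*p1*(s powr (2*a-2))" using th r p by (intro mult_left_mono) auto
  moreover have "p2 / (2*t) < p2 / (2* s)" using assms p by (intro divide_strict_left_mono) auto
  moreover have "\<And>x. x>0 \<Longrightarrow> Gt a r p1 p2 x = r*a*p1*(x powr (2*a-2)) + p2 / (2*x)"
    unfolding Gt_def using e by (metis times_divide_eq_right)
  ultimately show ?thesis using assms by simp
qed

lemma Gt_cont: "lo>0 \<Longrightarrow> continuous_on {lo..hi} (Gt a r p1 p2)"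
  unfolding Gt_def by (intro continuous_intros) auto

lemma Gt_inv:
  assumes "b > Gt a r p1 p2 1"
  shows "\<exists>t. 0<t \<and> t<1 \<and> Gt a r p1 p2 t = b"
proof -
  have "r*a*p1 > 0" using th r p by simp
  hence "Gt a r p1 p2 1 > 0" unfolding Gt_def using p by simp
  hence b: "b > 0" using assms by linarith
  define s where "s = min (1/2) (p2/(2*b))"
  have s: "0<s" "s<1" "s \<le> p2/(2*b)" using b p unfolding s_def by auto
  have "b \<le> p2/(2* s)" using s b by (simp add: field_simps)
  also have "\<dots> \<le> Gt a r p1 p2 s" unfolding Gt_def using s th r p by simp
  finally have "b \<le> Gt a r p1 p2 s" .
  then obtain t where t: "s \<le> t" "t \<le> 1" "Gt a r p1 p2 t = b"
    using IVT2'[of "Gt a r p1 p2" 1 b s] Gt_cont[OF s(1)] assms s by auto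
  moreover have "t \<noteq> 1" using t assms by auto
  ultimately have "0<t \<and> t<1 \<and> Gt a r p1 p2 t = b" using s by auto
  thus ?thesis by blast
qed

lemma Dt_phi_aux1:
  fixes t X :: real
  assumes "0<t" "t<1"
  shows "(1-t)^2/(2*t) * (p1 * (2*X/(t*(1-t)^2)) - p2) = p1*X/t^2 - p2*(1-t)^2/(2*t)"
proof -
  have t1: "(1-t) \<noteq> 0" "t \<noteq> 0" using assms by auto
  have "(1-t)^2/(2*t) * (p1 * (2*X/(t*(1-t)^2))) = p1*X/t^2" using t1 by (simp add: power2_eq_square)
  thus ?thesis by (simp add: right_diff_distrib)
qed

lemma Dt_phi_aux2:
  fixes t q c :: real
  assumes "0<t" "t<1"
  shows "p1*(t^2 - q*(t^2 + c*(1-t^2)))/t^2 - p2*(1-t)^2/(2*t) = p1*(1 - q) + p2*(1-t) - (c*p1*q/t^2 + p2/(2*t))*(1-t^2)"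
proof -
  have t1: "t \<noteq> 0" using assms by auto
  have a: "p1*(t^2 - q*(t^2 + c*(1-t^2)))/t^2 = p1*(1-q) - c*p1*q/t^2*(1-t^2)" using t1
    by (simp add: diff_divide_distrib add_divide_distrib power2_eq_square algebra_simps)
  have b: "- p2*(1-t)^2/(2*t) = p2*(1-t) - p2/(2*t)*(1-t^2)" using t1
    by (simp add: diff_divide_distrib add_divide_distrib power2_eq_square algebra_simps)
  show ?thesis using a b by (simp add: algebra_simps)
qed

lemma Dt_phi:
  assumes "0<t" "t<1"
  shows "Dt a r p1 p2 t = (1-t)^2/(2*t) * (p1 * phiF a r t - p2)"
proof -
  have "(1-t)^2/(2*t) * (p1 * phiF a r t - p2) = p1*(t^2 - t powr (2*a)*(t^2 + r*a*(1-t^2)))/t^2 - p2*(1-t)^2/(2*t)"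
    unfolding phiF_def by (rule Dt_phi_aux1[OF assms])
  also have "\<dots> = Dt a r p1 p2 t" unfolding Dt_def Gt_def using Dt_phi_aux2[OF assms, of "t powr (2*a)" "r*a"]
    by (simp add: mult.assoc)
  finally show ?thesis ..
qed

lemma Dt_pos_low:
  assumes "0<t" "t<1" "Gt a r p1 p2 t \<le> a*p1 + p2/2"
  shows "Dt a r p1 p2 t > 0"
proof -
  have y: "(t^2) powr a * 1 powr (1-a) \<le> a*t^2 + (1-a)*1"
    using assms th by (intro Youngs_inequality_0) auto
  have "t powr 2 = t^2" using assms by (intro powr_numeral) auto
  hence "(t^2) powr a = t powr (2*a)" by (metis powr_powr)
  hence y2: "t powr (2*a) \<le> a*t^2 + (1-a)" using y by simp
  have "t^2 \<le> 1" using assms by (intro power_le_one) auto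
  hence h: "Gt a r p1 p2 t*(1-t^2) \<le> (a*p1 + p2/2)*(1-t^2)" using assms(3) by (intro mult_right_mono) auto
  have d1: "Dt a r p1 p2 t \<ge> p1*(1 - t powr (2*a)) + p2*(1-t) - (a*p1 + p2/2)*(1-t^2)"
    unfolding Dt_def using h by linarith
  have "a*(1-t^2) = a - a*t^2" by (simp add: right_diff_distrib)
  hence "a*(1-t^2) \<le> 1 - t powr (2*a)" using y2 by linarith
  hence d2: "p1*(1 - t powr (2*a)) \<ge> p1*(a*(1-t^2))" using p by (intro mult_left_mono) auto
  have d3: "p1*(a*(1-t^2)) + p2*(1-t) - (a*p1 + p2/2)*(1-t^2) = p2*((1-t)^2/2)"
    by (simp add: field_simps power2_eq_square)
  have "p2*((1-t)^2/2) > 0" using assms p by simp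
  thus ?thesis using d1 d2 d3 by linarith
qed

lemma Dt_neg_small:
  assumes "0<t" "t \<le> p2/(4*(p1+p2))"
  shows "Dt a r p1 p2 t < 0"
proof -
  have "p2/(4*(p1+p2)) \<le> 1/4" using p by (simp add: divide_simps)
  hence t4: "t \<le> 1/4" using assms by linarith
  have "p2/(2*t) \<ge> 2*(p1+p2)" using assms p by (simp add: field_simps)
  moreover have "r*a*p1*(t powr (2*a))/t^2 \<ge> 0" using th r p by simp
  ultimately have G: "Gt a r p1 p2 t \<ge> 2*(p1+p2)" unfolding Gt_def by linarith
  have "t^2 \<le> (1/4)^2" using t4 assms by (intro power_mono) auto
  hence "t^2 \<le> 1/16" by (simp add: power_divide)
  hence "1 - t^2 \<ge> 3/4" by simp
  hence "Gt a r p1 p2 t*(1-t^2) \<ge> 2*(p1+p2)*(3/4)" using G p by (intro mult_mono) auto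
  moreover have "p1*(1 - t powr (2*a)) \<le> p1" using p by simp
  moreover have "p2*(1-t) \<le> p2" using p assms by simp
  moreover have "2*(p1+p2)*(3/4) = 3/2*p1 + 3/2*p2" by simp
  ultimately show ?thesis unfolding Dt_def using p by linarith
qed

lemma Dt_cont: "lo>0 \<Longrightarrow> continuous_on {lo..hi} (Dt a r p1 p2)"
  unfolding Dt_def Gt_def by (intro continuous_intros) auto

lemma Dt_sign:
  assumes "0<s" "s<t" "t<1" "Dt a r p1 p2 s \<ge> 0"
  shows "Dt a r p1 p2 t > 0"
proof -
  have c: "(1-s)^2/(2* s) > 0" using assms by simp
  have "p1 * phiF a r s - p2 = Dt a r p1 p2 s / ((1-s)^2/(2 * s))" using Dt_phi[of s] c assms by simp
  moreover have "Dt a r p1 p2 s / ((1-s)^2/(2 * s)) \<ge> 0" using assms(4) c by (rule divide_nonneg_pos)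
  ultimately have "p1 * phiF a r s - p2 \<ge> 0" by simp
  moreover have "phiF a r s < phiF a r t" using phiF_mono[OF th r assms(1-3)] .
  hence "p1 * phiF a r s < p1 * phiF a r t" using p by simp
  ultimately have "p1 * phiF a r t - p2 > 0" by linarith
  thus ?thesis using Dt_phi[of t] assms by simp
qed

lemma core_main:
  "\<exists>t2. 0<t2 \<and> t2<1 \<and> Gt a r p1 p2 t2 > a*p1 + p2/2 \<and>
     (\<forall>t. 0<t \<and> t<t2 \<longrightarrow> Dt a r p1 p2 t < 0) \<and> (\<forall>t. t2<t \<and> t<1 \<longrightarrow> Dt a r p1 p2 t > 0)"
proof -
  have "a*p1 + p2/2 > Gt a r p1 p2 1" unfolding Gt_def using th r p by simp
  then obtain tz where tz: "0<tz" "tz<1" "Gt a r p1 p2 tz = a*p1 + p2/2" using Gt_inv by blast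
  have Dz: "Dt a r p1 p2 tz > 0" using tz by (intro Dt_pos_low) auto
  define tl where "tl = min (tz/2) (p2/(4*(p1+p2)))"
  have tl: "0<tl" "tl<tz" "tl \<le> p2/(4*(p1+p2))" using tz p unfolding tl_def by auto
  have Dl: "Dt a r p1 p2 tl < 0" using tl by (intro Dt_neg_small) auto
  obtain t2 where t2: "tl \<le> t2" "t2 \<le> tz" "Dt a r p1 p2 t2 = 0"
    using IVT'[of "Dt a r p1 p2" tl 0 tz, OF _ _ _ Dt_cont[OF tl(1)]] Dl Dz tl by fastforce
  have t2': "0<t2" "t2<1" using t2 tl tz by auto
  have neg: "\<forall>t. 0<t \<and> t<t2 \<longrightarrow> Dt a r p1 p2 t < 0"
  proof safe
    fix t assume "0<t" "t<t2"
    show "Dt a r p1 p2 t < 0"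
    proof (rule ccontr)
      assume "\<not> ?thesis"
      hence "Dt a r p1 p2 t2 > 0" using \<open>0<t\<close> \<open>t<t2\<close> t2' by (intro Dt_sign[of t t2]) auto
      thus False using t2 by simp
    qed
  qed
  have pos: "\<forall>t. t2<t \<and> t<1 \<longrightarrow> Dt a r p1 p2 t > 0"
    using t2 t2' by (auto intro!: Dt_sign[of t2])
  have "Gt a r p1 p2 t2 > a*p1 + p2/2"
  proof (rule ccontr)
    assume "\<not> ?thesis"
    hence "Dt a r p1 p2 t2 > 0" using t2' by (intro Dt_pos_low) auto
    thus False using t2 by simp
  qed
  thus ?thesis using neg pos t2' by blast
qed

end



lemma int_powr:
  fixes e s :: real assumes "e < -1" "s > 0"
  shows "integral {s..} (\<lambda>x. x powr e) = -(s powr (e+1))/(e+1)"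
  using has_integral_powr_to_inf[OF assms] by (rule integral_unique)

lemma int_powr_c:
  fixes e s c :: real assumes "e < -1" "s > 0"
  assumes "\<And>x. x \<ge> s \<Longrightarrow> f x = c * x powr e"
  shows "integral {s..} f = c * (-(s powr (e+1))/(e+1))"
proof -
  have "((\<lambda>x. c * x powr e) has_integral c * (-(s powr (e+1))/(e+1))) {s..}"
    by (rule has_integral_mult_right[OF has_integral_powr_to_inf[OF assms(1,2)]])
  hence "(f has_integral c * (-(s powr (e+1))/(e+1))) {s..}"
    by (subst has_integral_cong[where g="\<lambda>x. c * x powr e"]) (auto simp: assms(3))
  thus ?thesis by (rule integral_unique)
qed

lemma Yf_eq: assumes "bet > 2" "s > 0" shows "Yf bet s = s powr (2-bet)/(bet-2)"
proof -
  have "Yf bet s = -(s powr (1-bet+1))/(1-bet+1)" unfolding Yf_def using assms by (intro int_powr) auto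
  also have "1-bet+1 = 2-bet" by simp
  finally have "Yf bet s = -(s powr (2-bet))/(2-bet)" .
  also have "\<dots> = -(s powr (2-bet))/(-(bet-2))" by simp
  finally show ?thesis by (simp only: minus_divide_divide)
qed

lemma x0_pos: "x0 gam > 0" if "gam > 2" using that unfolding x0_def by simp

lemma x0_pow: assumes "gam > 2" shows "x0 gam powr (1-gam) = gam-1"
proof -
  have "x0 gam powr (1-gam) = (1/(gam-1)) powr (1/(gam-1)*(1-gam))" unfolding x0_def by (simp add: powr_powr)
  also have "1/(gam-1)*(1-gam) = -1" using assms by (simp add: divide_simps)
  finally show ?thesis using assms by (simp add: powr_minus)
qed

lemma y0_pos: "y0 bet > 0" if "bet > 2" using that unfolding y0_def by simp

lemma Xbar_eq: assumes "gam > 2" shows "Xbar gam = x0 gam * (gam-1)/(gam-2)"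
proof -
  have X: "x0 gam > 0" using x0_pos assms by simp
  have "Xbar gam = -(x0 gam powr (1-gam+1))/(1-gam+1)" unfolding Xbar_def using assms X by (intro int_powr) auto
  also have "x0 gam powr (1-gam+1) = x0 gam powr (1-gam) * x0 gam" using X by (simp only: powr_add powr_one)
  also have "\<dots> = (gam-1) * x0 gam" using x0_pow assms by simp
  finally have "Xbar gam = -((gam-1) * x0 gam)/(-(gam-2))" by simp
  thus ?thesis by (simp only: minus_divide_divide) (simp add: algebra_simps)
qed

definition Acoef :: "real \<Rightarrow> real \<Rightarrow> real" where
  "Acoef gam th = x0 gam powr th * (gam-1)/(gam-1-th)"

lemma int_X:
  assumes "gam > 2" "0<th" "th<1"
  shows "-(x0 gam powr (th-gam+1))/(th-gam+1) = Acoef gam th"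
proof -
  have X: "x0 gam > 0" using x0_pos assms by simp
  have "th-gam+1 = th + (1-gam)" by simp
  hence "x0 gam powr (th-gam+1) = x0 gam powr th * x0 gam powr (1-gam)" using X by (simp only: powr_add)
  also have "\<dots> = x0 gam powr th * (gam-1)" using x0_pow assms by simp
  finally show ?thesis unfolding Acoef_def using assms by (simp add: divide_simps) (simp add: algebra_simps)
qed

lemma welfare_int:
  assumes "gam > 2" "0<th" "th<1" "c > 0"
  shows "integral {x0 gam..} (\<lambda>x. phi th (x * c) * x powr (- gam)) = c powr th * Acoef gam th"
proof -
  have X: "x0 gam > 0" using x0_pos assms by simp
  have "integral {x0 gam..} (\<lambda>x. phi th (x * c) * x powr (- gam)) = c powr th * (-(x0 gam powr (th-gam+1))/(th-gam+1))"
  proof (rule int_powr_c)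
    fix x assume "x \<ge> x0 gam"
    hence "x > 0" using X by linarith
    thus "phi th (x * c) * x powr (- gam) = c powr th * x powr (th-gam)"
      unfolding phi_def using assms by (simp add: powr_mult powr_add[symmetric])
  qed (use assms X in auto)
  thus ?thesis by (subst int_X[OF assms(1-3), symmetric]) simp
qed

lemma zeta_int:
  assumes "gam > 2" "0<th" "th<1" "c > 0"
  shows "integral {x0 gam..} (\<lambda>x. phi' th (x * c) * x powr (1 - gam)) = th * c powr (th-1) * Acoef gam th"
proof -
  have X: "x0 gam > 0" using x0_pos assms by simp
  have "integral {x0 gam..} (\<lambda>x. phi' th (x * c) * x powr (1 - gam)) = th * c powr (th-1) * (-(x0 gam powr (th-gam+1))/(th-gam+1))"
  proof (rule int_powr_c)
    fix x assume "x \<ge> x0 gam"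
    hence "x > 0" using X by linarith
    thus "phi' th (x * c) * x powr (1 - gam) = th * c powr (th-1) * x powr (th-gam)"
      unfolding phi'_def using assms by (simp add: powr_mult powr_add[symmetric])
  qed (use assms X in auto)
  thus ?thesis by (subst int_X[OF assms(1-3), symmetric]) simp
qed




locale model =
  fixes gam bet lam th :: real
  assumes g: "gam > 2" and b: "bet > 2" and l: "lam > 0" and th0: "0 < th" and th1: "th < 1"
begin

abbreviation "X \<equiv> x0 gam"
abbreviation "Yb \<equiv> Ybar bet"
abbreviation "Y0 \<equiv> y0 bet"
abbreviation "A \<equiv> Acoef gam th"
definition "ee = (2-bet)/2"
definition "rr = (gam-1-th)/(gam-1)"
definition "p1 = A * Yb powr th"
definition "p2 = lam * Xbar gam * Yb"
definition "tf y = (y/Y0) powr ee"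

lemma X_pos: "X > 0" using x0_pos g by simp
lemma Y0_pos: "Y0 > 0" using y0_pos b by simp
lemma Yb_eq: "Yb = Y0 powr (2-bet)/(bet-2)" unfolding Ybar_def using Yf_eq b Y0_pos by simp
lemma Yb_pos: "Yb > 0" using Yb_eq b Y0_pos by simp
lemma A_pos: "A > 0" unfolding Acoef_def using X_pos g th1 by simp
lemma Xbar_pos: "Xbar gam > 0" using Xbar_eq g X_pos by simp
lemma rr: "0 < rr" "rr < 1" unfolding rr_def using g th0 th1 by auto
lemma p1_pos: "p1 > 0" unfolding p1_def using A_pos Yb_pos by simp
lemma p2_pos: "p2 > 0" unfolding p2_def using l Xbar_pos Yb_pos by simp
lemma ee_neg: "ee < 0" unfolding ee_def using b by simp

sublocale core "th/2" rr p1 p2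
  by unfold_locales (use th0 th1 rr p1_pos p2_pos in auto)

lemma tf_pos: "tf y > 0" if "y > 0" using that Y0_pos unfolding tf_def by simp

lemma tf_Y0: "tf Y0 = 1" unfolding tf_def using Y0_pos by simp

lemma tf_mono: "0 < s \<Longrightarrow> s < t \<Longrightarrow> tf t < tf s"
  unfolding tf_def using ee_neg Y0_pos by (intro powr_less_mono2_neg) (auto simp: divide_strict_right_mono)

lemma tf_le1: "Y0 \<le> y \<Longrightarrow> tf y \<le> 1"
  using tf_mono[of Y0 y] tf_Y0 Y0_pos by (cases "y = Y0") auto

lemma Yf_tf: assumes "y > 0" shows "Yf bet y = Yb * (tf y)^2"
proof -
  have "(tf y)^2 = (y/Y0) powr (2-bet)"
    unfolding tf_def ee_def using assms Y0_pos by (simp add: power2_eq_square powr_add[symmetric])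
  also have "\<dots> = y powr (2-bet) / Y0 powr (2-bet)" using assms Y0_pos by (simp add: powr_divide)
  finally show ?thesis using Yf_eq[OF b assms] Yb_eq Y0_pos by simp
qed

lemma sqrt1: assumes "y > 0" shows "sqrt (Yb * Yf bet y) = Yb * tf y"
proof -
  have "Yb * Yf bet y = (Yb * tf y)^2" using Yf_tf[OF assms] by (simp add: power2_eq_square)
  thus ?thesis using Yb_pos tf_pos[OF assms] by simp
qed

lemma sqrt2: assumes "y > 0" shows "sqrt Yb / sqrt (Yf bet y) = 1 / tf y"
proof -
  have "sqrt (Yf bet y) = sqrt Yb * tf y" using Yf_tf[OF assms] tf_pos[OF assms] by (simp add: real_sqrt_mult)
  thus ?thesis using Yb_pos tf_pos[OF assms] by simp
qed

lemma welfare_tf: assumes "y > 0"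
  shows "welfare gam bet lam th a y = p1 * tf y powr (2*(th/2)) + p2 * tf y - a * Yb * (tf y)^2"
proof -
  have c: "Yb * tf y > 0" using Yb_pos tf_pos[OF assms] by simp
  have "welfare gam bet lam th a y = (Yb * tf y) powr th * A + lam * Xbar gam * (Yb * tf y) - a * (Yb * (tf y)^2)"
    unfolding welfare_def sqrt1[OF assms] unfolding welfare_int[OF g th0 th1 c] Yf_tf[OF assms] ..
  also have "(Yb * tf y) powr th = Yb powr th * tf y powr th" using Yb_pos tf_pos[OF assms] by (simp add: powr_mult)
  finally show ?thesis unfolding p1_def p2_def by (simp add: algebra_simps)
qed

lemma gfun_alg:
  fixes Xt Ybt tt x yb t :: real
  assumes "x > 0" "yb > 0" "t > 0"
  shows "yb * (1/2 * ((gam - 2) / (gam - 1) * (th * (Xt * Ybt * tt / (x * yb * t))) + lam)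
          * ((x * (gam-1)/(gam-2)) * (1 / t)))
       = rr * (th/2) * (Xt * (gam-1)/(gam-1-th) * Ybt) * tt / t^2 + lam * (x * (gam-1)/(gam-2)) * yb / (2*t)"
proof -
  have n: "gam-1 \<noteq> 0" "gam-2 \<noteq> 0" "gam-1-th \<noteq> 0" using g th1 by auto
  define m where "m = (gam-1)/(gam-2)"
  have m: "m \<noteq> 0" "x*(gam-1)/(gam-2) = x*m" "(gam-2)/(gam-1) = 1/m" unfolding m_def using n by auto
  have rr0: "rr \<noteq> 0" "Xt*(gam-1)/(gam-1-th) = Xt/rr" unfolding rr_def using n by auto
  have "yb * (1/2 * (1/m * (th * (Xt * Ybt * tt / (x * yb * t))) + lam) * ((x * m) * (1 / t)))
       = rr * (th/2) * (Xt/rr * Ybt) * tt / t^2 + lam * (x * m) * yb / (2*t)"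
    using assms m(1) rr0(1) by (simp add: field_simps power2_eq_square)
  thus ?thesis unfolding m(2,3) rr0(2) .
qed

lemma gfun_tf: assumes "y > 0"
  shows "Yb * gfun gam bet lam th y = Gt (th/2) rr p1 p2 (tf y)"
proof -
  have t: "tf y > 0" using tf_pos[OF assms] .
  have z: "X * (Yb * tf y) > 0" using X_pos Yb_pos t by simp
  have "phi' th (X * (Yb * tf y)) = th * ((X * (Yb * tf y)) powr th / (X * (Yb * tf y)))"
    unfolding phi'_def using z by (simp add: powr_diff)
  also have "(X * (Yb * tf y)) powr th = X powr th * Yb powr th * tf y powr th"
    using X_pos Yb_pos t by (simp add: powr_mult)
  finally have ph: "phi' th (X * (Yb * tf y)) = th * (X powr th * Yb powr th * tf y powr th / (X * Yb * tf y))"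
    by (simp add: mult.assoc)
  have "Yb * gfun gam bet lam th y = Yb * (1/2 * ((gam - 2) / (gam - 1) * (th * (X powr th * Yb powr th * tf y powr th / (X * Yb * tf y))) + lam)
          * ((X * (gam-1)/(gam-2)) * (1 / tf y)))"
  proof -
    have q: "Xbar gam * sqrt Yb / sqrt (Yf bet y) = (X*(gam-1)/(gam-2)) * (1 / tf y)"
      using sqrt2[OF assms] Xbar_eq[OF g] by (metis times_divide_eq_right)
    show ?thesis unfolding gfun_def sqrt1[OF assms] ph q ..
  qed
  also have "\<dots> = rr * (th/2) * (X powr th * (gam-1)/(gam-1-th) * Yb powr th) * tf y powr th / (tf y)^2 + lam * (X * (gam-1)/(gam-2)) * Yb / (2*tf y)"
    by (rule gfun_alg[OF X_pos Yb_pos t])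
  also have "\<dots> = Gt (th/2) rr p1 p2 (tf y)"
    unfolding Gt_def p1_def p2_def Acoef_def Xbar_eq[OF g] by (simp add: mult.assoc)
  finally show ?thesis .
qed


lemma Yf_Y0: "Yf bet Y0 = Yb" unfolding Ybar_def ..

lemma Gt1_lt: "Gt (th/2) rr p1 p2 1 < th/2*p1 + p2/2"
  unfolding Gt_def using rr th0 p1_pos by simp

lemma zeta_eq: "Yb * zeta gam bet lam th = th/2*p1 + p2/2"
proof -
  define F where "F = 1/2 * ((gam - 2) / (gam - 1) * phi' th (Yb * X) + lam) * Xbar gam"
  define S where "S = 1/2 * (integral {X..} (\<lambda>x. phi' th (x * Yb) * x powr (1 - gam)) + lam * Xbar gam)"
  have z: "zeta gam bet lam th = max F S" unfolding zeta_def F_def S_def ..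
  have "gfun gam bet lam th Y0 = F"
    unfolding gfun_def F_def Yf_Y0 using Yb_pos by (simp add: mult.commute)
  hence YF: "Yb * F = Gt (th/2) rr p1 p2 1" using gfun_tf[OF Y0_pos] tf_Y0 by simp
  have "Yb * Yb powr (th-1) = Yb powr th" using Yb_pos by (simp add: powr_diff)
  hence YS: "Yb * S = th/2*p1 + p2/2"
    unfolding S_def zeta_int[OF g th0 th1 Yb_pos] p1_def p2_def by (simp add: algebra_simps)
  have "Yb * max F S = max (Yb * F) (Yb * S)" using Yb_pos by (simp add: max_def)
  thus ?thesis using z YF YS Gt1_lt by simp
qed

lemma ystar_tf:
  assumes "0<t" "t<1" "Yb*a = Gt (th/2) rr p1 p2 t"
  shows "ystar gam bet lam th a > 0 \<and> tf (ystar gam bet lam th a) = t"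
proof -
  define yt where "yt = Y0 * t powr (1/ee)"
  have "1 powr (1/ee) < t powr (1/ee)" using assms ee_neg by (intro powr_less_mono2_neg) auto
  hence "t powr (1/ee) > 1" by simp
  hence yt: "yt > Y0" unfolding yt_def using Y0_pos by simp
  have tyt: "tf yt = t" unfolding tf_def yt_def using Y0_pos ee_neg assms by (simp add: powr_powr)
  have "Yb * gfun gam bet lam th yt = Yb * a" using gfun_tf[of yt] yt Y0_pos tyt assms by simp
  hence gyt: "gfun gam bet lam th yt = a" using Yb_pos by simp
  have uniq: "y = yt" if "Y0 \<le> y" "gfun gam bet lam th y = a" for y
  proof -
    have y0: "y > 0" using that Y0_pos by linarith
    have G: "Gt (th/2) rr p1 p2 (tf y) = Gt (th/2) rr p1 p2 t" using gfun_tf[OF y0] that assms by simp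
    have "tf y = t"
    proof (rule ccontr)
      assume "tf y \<noteq> t"
      hence "tf y < t \<or> t < tf y" by linarith
      thus False using Gt_mono[of "tf y" t] Gt_mono[of t "tf y"] tf_pos[OF y0] assms G by auto
    qed
    show "y = yt"
    proof (rule ccontr)
      assume "y \<noteq> yt"
      hence "y < yt \<or> yt < y" by linarith
      thus False using tf_mono[of y yt] tf_mono[of yt y] y0 yt Y0_pos \<open>tf y = t\<close> tyt by auto
    qed
  qed
  have "ystar gam bet lam th a = yt"
    unfolding ystar_def by (rule the_equality) (use yt gyt uniq in auto)
  thus ?thesis using yt Y0_pos tyt by simp
qed


lemma diff_eq:
  assumes "zeta gam bet lam th < a"
  shows "\<exists>t. 0<t \<and> t<1 \<and> Yb*a = Gt (th/2) rr p1 p2 t \<and>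
           S_NN gam bet lam th a - S_RM gam bet lam th a = Dt (th/2) rr p1 p2 t"
proof -
  have "Yb * zeta gam bet lam th < Yb * a" using assms Yb_pos by simp
  hence "Yb * a > Gt (th/2) rr p1 p2 1" using zeta_eq Gt1_lt by simp
  then obtain t where t: "0<t" "t<1" "Gt (th/2) rr p1 p2 t = Yb*a" using Gt_inv by blast
  define ys where "ys = ystar gam bet lam th a"
  have ys: "ys > 0" "tf ys = t" using ystar_tf[OF t(1,2) t(3)[symmetric]] unfolding ys_def by auto
  have NN: "S_NN gam bet lam th a = p1 + p2 - a*Yb"
    unfolding S_NN_def using welfare_tf[OF Y0_pos, of a] tf_Y0 by simp
  have RM: "S_RM gam bet lam th a = p1 * t powr (2*(th/2)) + p2 * t - a * Yb * t^2"
    unfolding S_RM_def ys_def[symmetric] using welfare_tf[OF ys(1), of a] ys(2) by simp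
  have "S_NN gam bet lam th a - S_RM gam bet lam th a = Dt (th/2) rr p1 p2 t"
    unfolding NN RM Dt_def t(3) by (simp add: algebra_simps)
  thus ?thesis using t by auto
qed

lemma main:
  "\<exists>!abar. abar > zeta gam bet lam th \<and>
           (\<forall>a. zeta gam bet lam th < a \<and> a < abar \<longrightarrow>
                S_NN gam bet lam th a > S_RM gam bet lam th a) \<and>
           (\<forall>a. a > abar \<longrightarrow> S_RM gam bet lam th a > S_NN gam bet lam th a)"
proof -
  obtain t2 where t2: "0<t2" "t2<1" "Gt (th/2) rr p1 p2 t2 > th/2*p1 + p2/2"
    and neg: "\<forall>t. 0<t \<and> t<t2 \<longrightarrow> Dt (th/2) rr p1 p2 t < 0"
    and pos: "\<forall>t. t2<t \<and> t<1 \<longrightarrow> Dt (th/2) rr p1 p2 t > 0"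
    using core_main by blast
  define abar where "abar = Gt (th/2) rr p1 p2 t2 / Yb"
  have Yab: "Yb * abar = Gt (th/2) rr p1 p2 t2" unfolding abar_def using Yb_pos by simp
  have P1: "abar > zeta gam bet lam th"
  proof -
    have "Yb * zeta gam bet lam th < Yb * abar" using Yab zeta_eq t2(3) by simp
    thus ?thesis using Yb_pos by simp
  qed
  have P2: "S_NN gam bet lam th a > S_RM gam bet lam th a" if a1: "zeta gam bet lam th < a" and a2: "a < abar" for a
  proof -
    obtain t where t: "0<t" "t<1" "Yb*a = Gt (th/2) rr p1 p2 t"
      "S_NN gam bet lam th a - S_RM gam bet lam th a = Dt (th/2) rr p1 p2 t"
      using diff_eq[OF a1] by blast
    have "Yb*a < Yb*abar" using a2 Yb_pos by simp
    hence lt: "Gt (th/2) rr p1 p2 t < Gt (th/2) rr p1 p2 t2" using t(3) Yab by simp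
    have "t2 < t"
    proof (rule ccontr)
      assume "\<not> t2 < t"
      hence "t < t2 \<or> t = t2" by linarith
      thus False using Gt_mono[of t t2] t(1) lt by auto
    qed
    hence "Dt (th/2) rr p1 p2 t > 0" using pos t by auto
    thus ?thesis using t(4) by simp
  qed
  have P3: "S_RM gam bet lam th a > S_NN gam bet lam th a" if "a > abar" for a
  proof -
    have z: "zeta gam bet lam th < a" using that P1 by simp
    obtain t where t: "0<t" "t<1" "Yb*a = Gt (th/2) rr p1 p2 t"
      "S_NN gam bet lam th a - S_RM gam bet lam th a = Dt (th/2) rr p1 p2 t"
      using diff_eq[OF z] by blast
    have "Yb*a > Yb*abar" using that Yb_pos by simp
    hence lt: "Gt (th/2) rr p1 p2 t > Gt (th/2) rr p1 p2 t2" using t(3) Yab by simp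
    have "t < t2"
    proof (rule ccontr)
      assume "\<not> t < t2"
      hence "t2 < t \<or> t = t2" by linarith
      thus False using Gt_mono[of t2 t] t2(1) lt by auto
    qed
    hence "Dt (th/2) rr p1 p2 t < 0" using neg t by auto
    thus ?thesis using t(4) by simp
  qed
  show ?thesis
  proof (rule ex1I[of _ abar])
    show "abar > zeta gam bet lam th \<and>
           (\<forall>a. zeta gam bet lam th < a \<and> a < abar \<longrightarrow>
                S_NN gam bet lam th a > S_RM gam bet lam th a) \<and>
           (\<forall>a. a > abar \<longrightarrow> S_RM gam bet lam th a > S_NN gam bet lam th a)"
      using P1 P2 P3 by blast
  next
    fix b assume B: "b > zeta gam bet lam th \<and>
           (\<forall>a. zeta gam bet lam th < a \<and> a < b \<longrightarrow>
                S_NN gam bet lam th a > S_RM gam bet lam th a) \<and>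
           (\<forall>a. a > b \<longrightarrow> S_RM gam bet lam th a > S_NN gam bet lam th a)"
    show "b = abar"
    proof (rule ccontr)
      assume "b \<noteq> abar"
      hence "b < abar \<or> abar < b" by linarith
      thus False
      proof
        assume "b < abar"
        define a where "a = (b + abar)/2"
        have "b < a" "a < abar" using \<open>b < abar\<close> unfolding a_def by auto
        hence "S_RM gam bet lam th a > S_NN gam bet lam th a" using B by blast
        moreover have "S_NN gam bet lam th a > S_RM gam bet lam th a"
          using P2 \<open>b < a\<close> \<open>a < abar\<close> B by force
        ultimately show False by simp
      next
        assume "abar < b"
        define a where "a = (b + abar)/2"
        have "abar < a" "a < b" using \<open>abar < b\<close> unfolding a_def by auto
        hence "S_RM gam bet lam th a > S_NN gam bet lam th a" using P3 by blast
        moreover have "S_NN gam bet lam th a > S_RM gam bet lam th a"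
          using B \<open>abar < a\<close> \<open>a < b\<close> P1 by force
        ultimately show False by simp
      qed
    qed
  qed
qed

end

theorem theorem5:
  fixes gam bet lam th :: real
  assumes "gam > 2" and "bet > 2" and "lam > 0" and "0 < th" and "th < 1"
  shows "\<exists>!abar. abar > zeta gam bet lam th \<and>
           (\<forall>a. zeta gam bet lam th < a \<and> a < abar \<longrightarrow>
                S_NN gam bet lam th a > S_RM gam bet lam th a) \<and>
           (\<forall>a. a > abar \<longrightarrow> S_RM gam bet lam th a > S_NN gam bet lam th a)"
proof -
  interpret model gam bet lam th using assms by unfold_locales
  show ?thesis by (rule main)
qed


end
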